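(* Let $n,m$ be non-negative integers and let $\mathrm{S}(1_n,1_m)$ be the set of permutations $\sigma\in S_{n+m}$ with $\sigma^{-1}(1)<\cdots<\sigma^{-1}(n)$ and $\sigma^{-1}(n+1)<\cdots<\sigma^{-1}(n+m)$. Then \[\sum_{\sigma\in\mathrm{S}(1_n,1_m)}(-1)^{p_-(\sigma)}C\bigl(p_-(\sigma),\lfloor (n+m)/2\rfloor-p_-(\sigma)\bigr)=\begin{cases}C(0,\lfloor n/2\rfloor)\,C(0,\lfloor m/2\rfloor)&\text{if } n \text{ or } m\text{ is even},\\ 4\,C(0,\lfloor n/2\rfloor)\,C(0,\lfloor m/2\rfloor)&\text{if } n\text{ and } m\text{ are odd},\end{cases}\] and, when $n\equiv m\pmod 2$ (so that $n+m$ is even), \[\sum_{\sigma\in\mathrm{S}(1_n,1_m)}(-1)^{p_+(\sigma)}C\bigl(p_+(\sigma),(n+m)/2-p_+(\sigma)\bigr)=\begin{cases}C(0,n/2)\,C(0,m/2)&\text{if } n\text{ and } m\text{ are even},\\0&\text{if } n\text{ and } m\text{ are odd.}\end{cases}\]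
   Context: For $\sigma\in S_N$, with the convention $\sigma(0)=0$, $p_+(\sigma)=\#\{i\in\{1,\ldots,N-1\}:\sigma(i-1)<\sigma(i)>\sigma(i+1)\}$ and $p_-(\sigma)=\#\{i\in\{2,\ldots,N-1\}:\sigma(i-1)<\sigma(i)>\sigma(i+1)\}$. $C(p,q)=\frac{(2p)!(2q)!}{p!(p+q)!q!}$ (so $C(0,q)=\binom{2q}{q}$). *)

theory Defs
  imports Complex_Main "HOL-Combinatorics.Permutations"
begin

text \<open>Permutations of {1..N} are functions nat => nat permuting {1..N}.
  The convention sigma(0) = 0 is built in explicitly via ext0.\<close>

definition ext0 :: "(nat \<Rightarrow> nat) \<Rightarrow> nat \<Rightarrow> nat" where
  "ext0 \<sigma> i = (if i = 0 then 0 else \<sigma> i)"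

definition pplus :: "nat \<Rightarrow> (nat \<Rightarrow> nat) \<Rightarrow> nat" where
  "pplus N \<sigma> = card {i \<in> {1..N - 1}. ext0 \<sigma> (i - 1) < ext0 \<sigma> i \<and> ext0 \<sigma> i > ext0 \<sigma> (i + 1)}"

definition pminus :: "nat \<Rightarrow> (nat \<Rightarrow> nat) \<Rightarrow> nat" where
  "pminus N \<sigma> = card {i \<in> {2..N - 1}. ext0 \<sigma> (i - 1) < ext0 \<sigma> i \<and> ext0 \<sigma> i > ext0 \<sigma> (i + 1)}"

definition superC :: "nat \<Rightarrow> nat \<Rightarrow> real" where
  "superC p q = fact (2 * p) * fact (2 * q) / (fact p * fact (p + q) * fact q)"

definition shuffleS :: "nat \<Rightarrow> nat \<Rightarrow> (nat \<Rightarrow> nat) set" where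
  "shuffleS n m = {\<sigma>. \<sigma> permutes {1..n + m} \<and>
      (\<forall>i j. 1 \<le> i \<and> i < j \<and> j \<le> n \<longrightarrow> inv \<sigma> i < inv \<sigma> j) \<and>
      (\<forall>i j. n + 1 \<le> i \<and> i < j \<and> j \<le> n + m \<longrightarrow> inv \<sigma> i < inv \<sigma> j)}"

end

theory Submission
  imports Defs "HOL-Computational_Algebra.Polynomial"
begin


lemma superC_Suc1: "superC (Suc p) q = 2*(2*p+1)/(p+q+1) * superC p q"
proof -
  have a: "fact (2 * Suc p) = (2*real p+1)*(2*real p+2) * (fact (2*p) :: real)"
    by (simp add: fact_Suc algebra_simps)
  have c: "fact (Suc p + q) = (real p+real q+1) * (fact (p+q) :: real)" by (simp add: fact_Suc algebra_simps)
  have e: "fact (Suc p) = (real p+1) * (fact p :: real)"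
    by (simp_all add: fact_Suc algebra_simps)
  have "superC (Suc p) q = ((2*real p+1)*(2*real p+2) * fact (2*p)) * fact (2*q) / (((real p+1) * fact p) * ((real p+real q+1) * fact (p+q)) * fact q)"
    by (simp only: superC_def a c e)
  also have "\<dots> = ((2*real p+2)/(real p+1)) * ((2*real p+1)/(real p+real q+1)) * (fact (2 * p) * fact (2 * q) / (fact p * fact (p + q) * fact q))"
    by (simp add: field_simps)
  also have "(2*real p+2)/(real p+1) = (2::real)" by (simp add: field_simps)
  finally show ?thesis unfolding superC_def by simp
qed

lemma superC_sym: "superC p q = superC q p"
  unfolding superC_def by (simp add: add.commute mult.commute mult.left_commute)

lemma superC_rec: "superC (Suc p) q + superC p (Suc q) = 4 * superC p q"
proof -
  have 1: "superC p (Suc q) = 2*(2*q+1)/(p+q+1) * superC p q"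
    using superC_Suc1[of q p] by (simp add: superC_sym add.commute)
  have "superC (Suc p) q + superC p (Suc q) = ((4*p+4*q+4)/(p+q+1)) * superC p q"
    unfolding 1 superC_Suc1 by (simp add: add_divide_distrib[symmetric] algebra_simps)
  also have "(4*p+4*q+4)/(p+q+1) = (4::real)" by (simp add: field_simps)
  finally show ?thesis .
qed

lemma superC_0: "superC 0 q = real (2*q choose q)"
  by (simp add: superC_def binomial_fact)

lemma X_mult: "(X::real poly) * [:0,1:] = pCons 0 X"
  by (simp add: mult_pCons_right smult_1_left)

lemma L1: "coeff ([:-1,1:]^(2*p) * [:1,1:]^(2*q)) (p+q) = (-1)^p * superC p q"
proof (induction p arbitrary: q)
  case 0
  then show ?case by (simp add: coeff_linear_poly_power superC_0)
next
  case (Suc p)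
  define X :: "real poly" where "X = [:-1,1:]^(2*p) * [:1,1:]^(2*q)"
  have sq: "[:-1,1:]^2 = [:1,1:]^2 - 4 * [:0,1::real:]"
    by (simp add: power2_eq_square numeral_poly)
  have pw: "[:-1,1:]^(2*Suc p) = [:-1,1:]^(2*p) * ([:-1,1:]^2 :: real poly)"
    by (simp add: power_add[symmetric])
  have "[:-1,1:]^(2*Suc p) * [:1,1:]^(2*q) = X * [:-1,1:]^2"
    unfolding pw X_def by (simp only: ac_simps)
  also have "\<dots> = X * [:1,1:]^2 - 4 * (X * [:0,1:])"
    unfolding sq by (simp only: right_diff_distrib mult.left_commute)
  also have pw2: "[:1,1:]^(2*Suc q) = [:1,1:]^(2*q) * ([:1,1:]^2 :: real poly)"
    by (simp add: power_add[symmetric])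
  have "X * [:1,1:]^2 = [:-1,1:]^(2*p) * [:1,1:]^(2*Suc q)"
    unfolding pw2 X_def by (simp only: ac_simps)
  finally have eq: "[:-1,1:]^(2*Suc p) * [:1,1:]^(2*q) = [:-1,1:]^(2*p) * [:1,1:]^(2*Suc q) - 4 * pCons 0 X"
    by (simp only: X_mult)
  have "coeff ([:-1,1:]^(2*Suc p) * [:1,1:]^(2*q)) (Suc p + q) =
     coeff ([:-1,1:]^(2*p) * [:1,1:]^(2*Suc q)) (p + Suc q) - 4 * coeff X (p+q)"
    unfolding eq by (simp add: numeral_poly)
  moreover have "superC (Suc p) q = 4*superC p q - superC p (Suc q)" using superC_rec[of p q] by linarith
  then have "(-1::real)^Suc p * superC (Suc p) q = (-1)^p * superC p (Suc q) - 4 * ((-1)^p * superC p q)"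
    by (simp only: power_Suc) (simp only: algebra_simps)
  ultimately show ?case using Suc.IH[of q] Suc.IH[of "Suc q"] unfolding X_def
    by linarith
qed

lemma coeff_lin_pow:
  fixes x y :: "'a::comm_semiring_1"
  shows "coeff ([:x,y:]^n) i = of_nat (n choose i) * y^i * x^(n-i)"
proof (cases "i \<le> n")
  case True then show ?thesis by (rule coeff_linear_poly_power)
next
  case False
  have "degree ([:x,y:]^n) \<le> degree [:x,y:] * n" by (rule degree_power_le)
  also have "\<dots> \<le> n" by simp
  finally have "coeff ([:x,y:]^n) i = 0" using False by (intro coeff_eq_0) simp
  then show ?thesis using False by (simp add: binomial_eq_0)
qed

lemma const_sum: "[:sum f A:] = (\<Sum>x\<in>A. [:f x:])"
  by (rule poly_eqI) (simp add: coeff_sum coeff_pCons split: nat.split)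

definition lift :: "real poly \<Rightarrow> real poly poly" where
  "lift p = map_poly (\<lambda>x. [:x:]) p"

lemma coeff_lift: "coeff (lift p) k = [:coeff p k:]"
  by (simp add: lift_def coeff_map_poly)

lemma lift_mult: "lift (p*q) = lift p * lift q"
  by (rule poly_eqI) (simp add: coeff_lift coeff_mult const_sum ac_simps)

lemma lift_1: "lift 1 = 1"
  by (simp add: lift_def)

lemma lift_power: "lift (p^k) = (lift p)^k"
  by (induction k) (simp_all add: lift_1 lift_mult)

lemma coeff_const_mult: "coeff ([:c:] * p) k = c * coeff p k"
  by simp

lemma E1:
  fixes a b :: "real poly"
  shows "coeff ([:b,a:]^n * [:a,b:]^m) m =
    (\<Sum>k\<le>n+m. of_nat (n choose k) * of_nat (m choose k) * a^(2*k) * b^(n+m-2*k))"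
proof -
  have "coeff ([:b,a:]^n * [:a,b:]^m) m = (\<Sum>k\<le>m. coeff ([:b,a:]^n) k * coeff ([:a,b:]^m) (m-k))"
    by (rule coeff_mult)
  also have "\<dots> = (\<Sum>k\<le>m. of_nat (n choose k) * of_nat (m choose k) * a^(2*k) * b^(n+m-2*k))"
  proof (rule sum.cong[OF refl])
    fix k assume k: "k \<in> {..m}"
    show "coeff ([:b,a:]^n) k * coeff ([:a,b:]^m) (m-k) = of_nat (n choose k) * of_nat (m choose k) * a^(2*k) * b^(n+m-2*k)"
    proof (cases "k \<le> n")
      case True
      have e: "n+m-2*k = (n-k) + (m-k)" "2*k = k+k" using True k by auto
      have mk: "m choose (m-k) = m choose k" using k by (simp add: binomial_symmetric[symmetric])
      have L: "coeff ([:b,a:]^n) k = of_nat (n choose k) * a^k * b^(n-k)" by (simp add: coeff_lin_pow)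
      have R: "coeff ([:a,b:]^m) (m-k) = of_nat (m choose k) * b^(m-k) * a^k"
        using coeff_lin_pow[of a b m "m-k"] k mk by simp
      have "of_nat (n choose k) * of_nat (m choose k) * a^(2*k) * b^(n+m-2*k)
          = of_nat (n choose k) * of_nat (m choose k) * (a^k * a^k) * (b^(n-k) * b^(m-k))"
      proof -
        have b1: "b^(n+m-2*k) = b^(n-k)*b^(m-k)" by (simp only: e(1) power_add)
        have a1: "a^(2*k) = a^k*a^k" by (simp only: e(2) power_add)
        show ?thesis unfolding a1 b1 ..
      qed
      then show ?thesis unfolding L R by (simp only: mult_ac)
    next
      case False then show ?thesis by (simp add: coeff_lin_pow)
    qed
  qed
  also have "\<dots> = (\<Sum>k\<le>n+m. of_nat (n choose k) * of_nat (m choose k) * a^(2*k) * b^(n+m-2*k))"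
    by (rule sum.mono_neutral_left) auto
  finally show ?thesis .
qed

lemma of_nat_mult_poly: "(of_nat k :: 'a::comm_semiring_1 poly) * p = smult (of_nat k) p"
  by (simp add: of_nat_poly)

lemma of_nat_mult_poly': "p * (of_nat k :: 'a::comm_semiring_1 poly) = smult (of_nat k) p"
  by (simp add: of_nat_poly)

lemma m1_pow_mult_poly: "((-1) ^ k :: 'a::comm_ring_1 poly) * p = smult ((-1)^k) p"
proof -
  have m1: "(-1 :: 'a poly) = [:-1:]" by (simp add: one_pCons)
  have "((-1) ^ k :: 'a poly) = [:(-1)^k:]" unfolding m1 by (simp add: poly_const_pow)
  then show ?thesis by simp
qed

lemma m1_pow_mult_poly': "p * ((-1) ^ k :: 'a::comm_ring_1 poly) = smult ((-1)^k) p"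
  by (metis m1_pow_mult_poly mult.commute)

lemma neg_pow_smult: "(- (V::'a::comm_ring_1 poly)) ^ k = smult ((-1)^k) (V^k)"
  by (simp add: power_minus[of V] m1_pow_mult_poly)

lemma x_pow_monom: "([:0,1:] :: 'a::comm_semiring_1 poly) ^ s = monom 1 s"
  by (simp add: monom_altdef)

lemma E2:
  fixes n m M :: nat
  shows "coeff (coeff ([:[:1,1:],[:-1,1:]:]^n * [:[:-1,1:],[:1,1:]:]^m :: real poly poly) m) M
       = coeff ([:1,1:]^M * [:1,-1:]^(n+m-M) :: real poly) m * coeff ([:1,1:]^n * [:-1,1:]^m :: real poly) M"
proof -
  define z :: "real poly" where "z = [:0,1:]"
  define U where "U = lift [:1,1:]"
  define V where "V = lift [:1,-1:]"
  define \<kappa> where "\<kappa> s = coeff ([:1,1:]^s * [:1,-1:]^(n+m-s) :: real poly) m" for s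
  define c where "c i j = real (n choose i) * real (m choose j) * (-1)^(m-j)" for i j
  have A: "[:[:1,1:],[:-1,1:]:] = smult z U + V"
    by (simp add: z_def U_def V_def lift_def map_poly_pCons one_pCons)
  have B: "[:[:-1,1:],[:1,1:]:] = smult z U + (-V)"
    by (simp add: z_def U_def V_def lift_def map_poly_pCons one_pCons)
  have "(smult z U + V)^n * (smult z U + (-V))^m
      = (\<Sum>i\<le>n. of_nat (n choose i) * (smult z U)^i * V^(n-i)) * (\<Sum>j\<le>m. of_nat (m choose j) * (smult z U)^j * (-V)^(m-j))"
    by (simp only: binomial_ring)
  also have "\<dots> = (\<Sum>i\<le>n. \<Sum>j\<le>m. smult ([:c i j:] * z^(i+j)) (lift ([:1,1:]^(i+j) * [:1,-1:]^(n+m-(i+j)))))"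
    unfolding sum_product
  proof (intro sum.cong refl)
    fix i j assume i: "i \<in> {..n}" and j: "j \<in> {..m}"
    have e: "n+m-(i+j) = (n-i) + (m-j)" using i j by auto
    show "of_nat (n choose i) * (smult z U)^i * V^(n-i) * (of_nat (m choose j) * (smult z U)^j * (-V)^(m-j))
       = smult ([:c i j:] * z^(i+j)) (lift ([:1,1:]^(i+j) * [:1,-1:]^(n+m-(i+j))))"
      unfolding e lift_mult lift_power U_def[symmetric] V_def[symmetric] c_def
      by (simp add: neg_pow_smult of_nat_mult_poly m1_pow_mult_poly smult_power power_add
            m1_pow_mult_poly' mult_ac of_nat_poly[where 'a=real])
  qed
  finally have P: "[:[:1,1:],[:-1,1:]:]^n * [:[:-1,1:],[:1,1:]:]^m = (\<Sum>i\<le>n. \<Sum>j\<le>m. smult ([:c i j:] * z^(i+j)) (lift ([:1,1:]^(i+j) * [:1,-1:]^(n+m-(i+j)))))"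
    unfolding A B .
  have "coeff (coeff ([:[:1,1:],[:-1,1:]:]^n * [:[:-1,1:],[:1,1:]:]^m) m) M
       = (\<Sum>i\<le>n. \<Sum>j\<le>m. c i j * (if i + j = M then \<kappa> M else 0))"
    unfolding P coeff_sum coeff_smult coeff_lift
    by (intro sum.cong refl) (simp add: z_def x_pow_monom \<kappa>_def)
  also have "\<dots> = \<kappa> M * (\<Sum>i\<le>n. \<Sum>j\<le>m. c i j * (if i + j = M then 1 else 0))"
    unfolding sum_distrib_left by (intro sum.cong refl) simp
  also have "(\<Sum>i\<le>n. \<Sum>j\<le>m. c i j * (if i + j = M then 1 else 0)) = coeff ([:1,1:]^n * [:-1,1:]^m :: real poly) M"
  proof -
    have "[:1,1:] = z + 1" "[:-1,1:] = z + (-1)" by (simp_all add: z_def one_pCons)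
    then have "([:1,1:]^n * [:-1,1:]^m :: real poly) = (z + 1)^n * (z + (-1))^m"
      by simp
    also have "\<dots> = (\<Sum>i\<le>n. of_nat (n choose i) * z^i * 1^(n-i)) * (\<Sum>j\<le>m. of_nat (m choose j) * z^j * (-1)^(m-j))"
      by (simp only: binomial_ring)
    also have "\<dots> = (\<Sum>i\<le>n. \<Sum>j\<le>m. smult (c i j) (monom 1 (i+j)))"
      unfolding sum_product
      by (intro sum.cong refl) (simp add: c_def z_def x_pow_monom of_nat_mult_poly of_nat_mult_poly' m1_pow_mult_poly m1_pow_mult_poly' mult_monom mult_ac)
    finally show ?thesis
      by (simp add: coeff_sum)
  qed
  finally show ?thesis unfolding \<kappa>_def by simp
qed

lemma kappa:
  "coeff ([:1,1:]^M * [:1,-1:]^M :: real poly) m = (if even m then (-1)^(m div 2) * real (M choose (m div 2)) else 0)"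
proof -
  have "([:1,1:]^M * [:1,-1:]^M :: real poly) = (- monom 1 2 + 1)^M"
  proof -
    have "([:1,1:] * [:1,-1:] :: real poly) = - monom 1 2 + 1"
      by (simp add: monom_altdef one_pCons power2_eq_square)
    then show ?thesis by (simp add: power_mult_distrib[symmetric])
  qed
  also have "\<dots> = (\<Sum>j\<le>M. of_nat (M choose j) * (- monom 1 2)^j * 1^(M-j))"
    by (simp only: binomial_ring)
  also have "\<dots> = (\<Sum>j\<le>M. smult (real (M choose j) * (-1)^j) (monom 1 (2*j)))"
    by (intro sum.cong refl) (simp add: neg_pow_smult of_nat_mult_poly monom_altdef power_mult[symmetric] mult.commute)
  finally have eq: "([:1,1:]^M * [:1,-1:]^M :: real poly) = \<dots>" .
  have "coeff ([:1,1:]^M * [:1,-1:]^M :: real poly) m = (\<Sum>j\<le>M. (if j = m div 2 \<and> even m then real (M choose j) * (-1)^j else 0))"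
    unfolding eq coeff_sum by (intro sum.cong refl) auto
  also have "\<dots> = (if even m then (-1)^(m div 2) * real (M choose (m div 2)) else 0)"
  proof (cases "even m")
    case True
    then show ?thesis
      by (cases "m div 2 \<le> M") (auto simp: sum.delta binomial_eq_0)
  qed simp
  finally show ?thesis .
qed

lemma prodC: "real ((c+d) choose d) * superC d c = real ((2*c) choose c) * real ((2*d) choose d)"
proof -
  have A: "real ((c+d) choose d) = fact (c+d) / (fact d * fact c)" by (simp add: binomial_fact)
  have B: "real ((2*c) choose c) = fact (2*c) / (fact c * fact c)" by (simp add: binomial_fact mult_2)
  have C: "real ((2*d) choose d) = fact (2*d) / (fact d * fact d)" by (simp add: binomial_fact mult_2)
  have D: "fact (d + c) = (fact (c+d) :: real)" by (simp add: add.commute)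
  show ?thesis unfolding superC_def A B C D by (simp add: field_simps)
qed

lemma Phi:
  assumes NM: "n + m = 2*M"
  shows "(\<Sum>k\<le>n+m. real (n choose k) * real (m choose k) * ((-1)^k * superC k (M-k)))
       = (if even n then real (n choose (n div 2)) * real (m choose (m div 2)) else 0)"
proof -
  have "(\<Sum>k\<le>n+m. real (n choose k) * real (m choose k) * ((-1)^k * superC k (M-k)))
      = coeff (\<Sum>k\<le>n+m. of_nat (n choose k) * of_nat (m choose k) * [:-1,1:]^(2*k) * [:1,1:]^(n+m-2*k) :: real poly) M"
    unfolding coeff_sum
  proof (intro sum.cong refl)
    fix k assume "k \<in> {..n+m}"
    show "real (n choose k) * real (m choose k) * ((-1)^k * superC k (M-k))
        = coeff (of_nat (n choose k) * of_nat (m choose k) * [:-1,1:]^(2*k) * [:1,1:]^(n+m-2*k) :: real poly) M"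
    proof (cases "k \<le> n \<and> k \<le> m")
      case True
      then have e: "n+m-2*k = 2*(M-k)" "M = k + (M-k)" using NM by auto
      have "coeff ([:-1,1:]^(2*k) * [:1,1:]^(n+m-2*k) :: real poly) M = (-1)^k * superC k (M-k)"
        using L1[of k "M-k"] unfolding e(1) by (subst e(2)) simp
      then show ?thesis by (simp add: of_nat_mult_poly mult.assoc)
    next
      case False
      then show ?thesis by (auto simp: binomial_eq_0)
    qed
  qed
  also have "\<dots> = coeff (coeff ([:[:1,1:],[:-1,1:]:]^n * [:[:-1,1:],[:1,1:]:]^m :: real poly poly) m) M"
    by (simp only: E1)
  also have "\<dots> = coeff ([:1,1:]^M * [:1,-1:]^M :: real poly) m * coeff ([:1,1:]^n * [:-1,1:]^m :: real poly) M"
    using E2[of n m M] NM by simp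
  also have "\<dots> = (if even n then real (n choose (n div 2)) * real (m choose (m div 2)) else 0)"
  proof (cases "even n")
    case True
    then obtain c where c: "n = 2*c" by auto
    from True NM have "even m" by presburger
    then obtain d where d: "m = 2*d" by auto
    have M: "M = c + d" using NM c d by simp
    have "coeff ([:1,1:]^n * [:-1,1:]^m :: real poly) M = (-1)^d * superC d c"
      using L1[of d c] unfolding c d M by (simp add: mult.commute add.commute)
    moreover have "coeff ([:1,1:]^M * [:1,-1:]^M :: real poly) m = (-1)^d * real ((c+d) choose d)"
      unfolding kappa using d M by simp
    ultimately show ?thesis using True c d prodC[of c d] by (simp add: algebra_simps)
  next
    case False
    then have "odd m" using NM by presburger
    then show ?thesis using False by (simp add: kappa)
  qed
  finally show ?thesis .
qed



fun hlc :: "bool list \<Rightarrow> nat" where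
  "hlc [] = 0"
| "hlc [x] = 0"
| "hlc (x # y # w) = (if x \<and> \<not> y then 1 else 0) + hlc (y # w)"

definition Wd :: "nat \<Rightarrow> nat \<Rightarrow> bool list set" where
  "Wd n m = {w. length (filter (\<lambda>b. b) w) = m \<and> length (filter Not w) = n}"

lemma hlc_False: "hlc (False # w) = hlc w"
  by (cases w) auto

lemma hlc_TT: "hlc (True # True # w) = hlc (True # w)"
  by simp

lemma hlc_TF: "hlc (True # False # w) = Suc (hlc w)"
  by (simp add: hlc_False)

lemma Wd_finite: "finite (Wd n m)"
proof -
  have "Wd n m \<subseteq> {w. set w \<subseteq> UNIV \<and> length w = n + m}"
    unfolding Wd_def using sum_length_filter_compl[of "\<lambda>b. b"] by auto (metis add.commute)
  moreover have "finite {w::bool list. set w \<subseteq> UNIV \<and> length w = n + m}"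
    by (rule finite_lists_length_eq) simp
  ultimately show ?thesis by (rule finite_subset)
qed

lemma Nil_Wd: "[] \<in> Wd n m \<longleftrightarrow> n = 0 \<and> m = 0"
  by (auto simp: Wd_def)

lemma Cons_Wd: "x # w \<in> Wd n m \<longleftrightarrow> (if x then m > 0 \<and> w \<in> Wd n (m - 1) else n > 0 \<and> w \<in> Wd (n - 1) m)"
  by (auto simp: Wd_def)

lemma Wd_00: "Wd 0 0 = {[]}"
proof -
  have "w = []" if "w \<in> Wd 0 0" for w
    using that sum_length_filter_compl[of "\<lambda>b. b" w] by (simp add: Wd_def)
  then show ?thesis using Nil_Wd[of 0 0] by auto
qed

lemma Wd_S0: "Wd (Suc n) 0 = (#) False ` Wd n 0"
proof (rule set_eqI)
  fix w show "w \<in> Wd (Suc n) 0 \<longleftrightarrow> w \<in> (#) False ` Wd n 0"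
    by (cases w) (auto simp: Nil_Wd Cons_Wd)
qed

lemma Wd_0S: "Wd 0 (Suc m) = (#) True ` Wd 0 m"
proof (rule set_eqI)
  fix w show "w \<in> Wd 0 (Suc m) \<longleftrightarrow> w \<in> (#) True ` Wd 0 m"
    by (cases w) (auto simp: Nil_Wd Cons_Wd)
qed

lemma Wd_SS: "Wd (Suc n) (Suc m) = (#) False ` Wd n (Suc m) \<union> (#) True ` Wd (Suc n) m"
proof (rule set_eqI)
  fix w show "w \<in> Wd (Suc n) (Suc m) \<longleftrightarrow> w \<in> (#) False ` Wd n (Suc m) \<union> (#) True ` Wd (Suc n) m"
    by (cases w) (auto simp: Nil_Wd Cons_Wd)
qed

lemma sum_Wd_SS: "(\<Sum>w\<in>Wd (Suc n) (Suc m). h w) = (\<Sum>w\<in>Wd n (Suc m). h (False # w)) + (\<Sum>w\<in>Wd (Suc n) m. h (True # w))"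
proof -
  have "(\<Sum>w\<in>Wd (Suc n) (Suc m). h w) = (\<Sum>w\<in>(#) False ` Wd n (Suc m). h w) + (\<Sum>w\<in>(#) True ` Wd (Suc n) m. h w)"
    unfolding Wd_SS by (rule sum.union_disjoint) (auto simp: Wd_finite)
  also have "\<dots> = (\<Sum>w\<in>Wd n (Suc m). h (False # w)) + (\<Sum>w\<in>Wd (Suc n) m. h (True # w))"
    by (simp add: sum.reindex)
  finally show ?thesis .
qed

lemma sum_Wd_S0: "(\<Sum>w\<in>Wd (Suc n) 0. h w) = (\<Sum>w\<in>Wd n 0. h (False # w))"
  unfolding Wd_S0 by (simp add: sum.reindex)

lemma sum_Wd_0S: "(\<Sum>w\<in>Wd 0 (Suc m). h w) = (\<Sum>w\<in>Wd 0 m. h (True # w))"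
  unfolding Wd_0S by (simp add: sum.reindex)

lemma Wd_0m: "Wd 0 m = {replicate m True}"
  by (induction m) (auto simp: Wd_00 Wd_0S)

lemma Wd_n0: "Wd n 0 = {replicate n False}"
  by (induction n) (auto simp: Wd_00 Wd_S0)

lemma hlc_rep: "hlc (replicate m True) = 0"
  by (induction m rule: nat_less_induct) (case_tac n; case_tac "n - 1"; auto)

lemma II_from_I:
  assumes I: "\<And>f m K. n + m \<le> K \<Longrightarrow> (\<Sum>w\<in>Wd n m. f (hlc w)) = (\<Sum>k\<le>K. real (n choose k) * real (m choose k) * f k)"
  shows "n + m + 1 \<le> K \<Longrightarrow> (\<Sum>w\<in>Wd (Suc n) m. f (hlc (True # w))) = (\<Sum>j\<le>K. real (n choose j) * real (Suc m choose Suc j) * f (Suc j))"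
proof (induction m)
  case 0
  have "(\<Sum>w\<in>Wd (Suc n) 0. f (hlc (True # w))) = (\<Sum>w\<in>Wd n 0. f (Suc (hlc w)))"
    unfolding sum_Wd_S0 hlc_TF ..
  also have "\<dots> = (\<Sum>k\<le>K. real (n choose k) * real (0 choose k) * f (Suc k))"
    using I[of 0 K "\<lambda>k. f (Suc k)"] 0 by simp
  also have "\<dots> = (\<Sum>j\<le>K. real (n choose j) * real (Suc 0 choose Suc j) * f (Suc j))"
    by (intro sum.cong refl) (auto simp: binomial_eq_0)
  finally show ?case .
next
  case (Suc m)
  have "(\<Sum>w\<in>Wd (Suc n) (Suc m). f (hlc (True # w)))
      = (\<Sum>w\<in>Wd n (Suc m). f (Suc (hlc w))) + (\<Sum>w\<in>Wd (Suc n) m. f (hlc (True # w)))"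
    unfolding sum_Wd_SS hlc_TF hlc_TT ..
  also have "\<dots> = (\<Sum>k\<le>K. real (n choose k) * real (Suc m choose k) * f (Suc k))
       + (\<Sum>j\<le>K. real (n choose j) * real (Suc m choose Suc j) * f (Suc j))"
    using I[of "Suc m" K "\<lambda>k. f (Suc k)"] Suc by simp
  also have "\<dots> = (\<Sum>j\<le>K. real (n choose j) * real (Suc (Suc m) choose Suc j) * f (Suc j))"
    unfolding sum.distrib[symmetric]
  proof (intro sum.cong refl)
    fix j
    have "Suc (Suc m) choose Suc j = (Suc m choose j) + (Suc m choose Suc j)" by (rule binomial_Suc_Suc)
    then show "real (n choose j) * real (Suc m choose j) * f (Suc j) + real (n choose j) * real (Suc m choose Suc j) * f (Suc j) =
      real (n choose j) * real (Suc (Suc m) choose Suc j) * f (Suc j)"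
      by (simp only: of_nat_add distrib_left distrib_right)
  qed
  finally show ?case .
qed

lemma count_I: "n + m \<le> K \<Longrightarrow> (\<Sum>w\<in>Wd n m. f (hlc w)) = (\<Sum>k\<le>K. real (n choose k) * real (m choose k) * f k)"
proof (induction n arbitrary: m K f)
  case 0
  have "(\<Sum>k\<le>K. real (0 choose k) * real (m choose k) * f k) = (\<Sum>k\<le>K. (if k = 0 then f 0 else 0))"
    by (intro sum.cong refl) (simp add: binomial_eq_0)
  then show ?case by (simp add: Wd_0m hlc_rep)
next
  case (Suc n)
  show ?case
  proof (cases m)
    case 0
    have "(\<Sum>w\<in>Wd (Suc n) 0. f (hlc w)) = (\<Sum>w\<in>Wd n 0. f (hlc w))"
      unfolding sum_Wd_S0 hlc_False ..
    also have "\<dots> = (\<Sum>k\<le>K. real (n choose k) * real (0 choose k) * f k)"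
      using Suc.IH[of 0 K f] Suc.prems 0 by simp
    also have "\<dots> = (\<Sum>k\<le>K. real (Suc n choose k) * real (0 choose k) * f k)"
      by (intro sum.cong refl) (case_tac "x = 0"; simp add: binomial_eq_0)
    finally show ?thesis using 0 by simp
  next
    case (Suc m')
    note m = this
    obtain K' where K: "K = Suc K'" using Suc.prems m by (cases K) auto
    have "(\<Sum>w\<in>Wd (Suc n) m. f (hlc w)) = (\<Sum>w\<in>Wd n (Suc m'). f (hlc w)) + (\<Sum>w\<in>Wd (Suc n) m'. f (hlc (True # w)))"
      unfolding m sum_Wd_SS hlc_False ..
    also have "\<dots> = (\<Sum>k\<le>K. real (n choose k) * real (Suc m' choose k) * f k)
        + (\<Sum>j\<le>K. real (n choose j) * real (Suc m' choose Suc j) * f (Suc j))"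
      using Suc.IH[of "Suc m'" K f] II_from_I[OF Suc.IH, of m' K f] Suc.prems m by simp
    also have "(\<Sum>k\<le>K. real (n choose k) * real (Suc m' choose k) * f k)
        = f 0 + (\<Sum>j\<le>K'. real (n choose Suc j) * real (Suc m' choose Suc j) * f (Suc j))"
      unfolding K sum.atMost_Suc_shift by simp
    also have "(\<Sum>j\<le>K. real (n choose j) * real (Suc m' choose Suc j) * f (Suc j))
        = (\<Sum>j\<le>K'. real (n choose j) * real (Suc m' choose Suc j) * f (Suc j))"
      unfolding K using Suc.prems K by (simp add: binomial_eq_0)
    also have "f 0 + (\<Sum>j\<le>K'. real (n choose Suc j) * real (Suc m' choose Suc j) * f (Suc j))
        + (\<Sum>j\<le>K'. real (n choose j) * real (Suc m' choose Suc j) * f (Suc j))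
        = (\<Sum>k\<le>K. real (Suc n choose k) * real (m choose k) * f k)"
      unfolding K sum.atMost_Suc_shift m
      by (simp add: sum.distrib[symmetric] algebra_simps)
    finally show ?thesis .
  qed
qed



lemma shuf_perm: "\<sigma> \<in> shuffleS n m \<Longrightarrow> \<sigma> permutes {1..n+m}"
  by (simp add: shuffleS_def)

lemma shuf_mono:
  assumes s: "\<sigma> \<in> shuffleS n m" and p: "p \<in> {1..n+m}" and q: "q \<in> {1..n+m}" and pq: "p < q"
    and c: "(\<sigma> p \<le> n \<and> \<sigma> q \<le> n) \<or> (n < \<sigma> p \<and> n < \<sigma> q)"
  shows "\<sigma> p < \<sigma> q"
proof (rule ccontr)
  assume "\<not> \<sigma> p < \<sigma> q"
  have perm: "\<sigma> permutes {1..n+m}" using s by (simp add: shuffleS_def)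
  have "\<sigma> p \<noteq> \<sigma> q" using permutes_inj[OF perm] pq by (auto dest: injD)
  with \<open>\<not> \<sigma> p < \<sigma> q\<close> have lt: "\<sigma> q < \<sigma> p" by simp
  have inr: "\<sigma> p \<in> {1..n+m}" "\<sigma> q \<in> {1..n+m}" using p q permutes_in_image[OF perm] by auto
  have ip: "inv \<sigma> (\<sigma> p) = p" and iq: "inv \<sigma> (\<sigma> q) = q" using permutes_inverses[OF perm] by auto
  from c show False
  proof
    assume "\<sigma> p \<le> n \<and> \<sigma> q \<le> n"
    then have "inv \<sigma> (\<sigma> q) < inv \<sigma> (\<sigma> p)" using s lt inr unfolding shuffleS_def by auto
    then show False using ip iq pq by simp
  next
    assume "n < \<sigma> p \<and> n < \<sigma> q"
    then have "inv \<sigma> (\<sigma> q) < inv \<sigma> (\<sigma> p)" using s lt inr unfolding shuffleS_def by auto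
    then show False using ip iq pq by simp
  qed
qed

lemma shuf_val_L:
  assumes s: "\<sigma> \<in> shuffleS n m" and i: "i \<in> {1..n+m}" and L: "\<sigma> i \<le> n"
  shows "card {j \<in> {1..i}. \<sigma> j \<le> n} = \<sigma> i"
proof -
  have perm: "\<sigma> permutes {1..n+m}" using s by (simp add: shuffleS_def)
  have img: "\<sigma> ` {j \<in> {1..i}. \<sigma> j \<le> n} = {1..\<sigma> i}"
  proof (rule set_eqI, rule iffI)
    fix v assume "v \<in> \<sigma> ` {j \<in> {1..i}. \<sigma> j \<le> n}"
    then obtain j where j: "j \<in> {1..i}" "\<sigma> j \<le> n" "v = \<sigma> j" by auto
    have jN: "j \<in> {1..n+m}" using j i by auto
    have "\<sigma> j \<in> {1..n+m}" using jN permutes_in_image[OF perm] by auto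
    moreover have "\<sigma> j \<le> \<sigma> i"
    proof (cases "j = i")
      case False
      then have "j < i" using j by auto
      then show ?thesis using shuf_mono[OF s jN i] j L by fastforce
    qed simp
    ultimately show "v \<in> {1..\<sigma> i}" using j by auto
  next
    fix v assume v: "v \<in> {1..\<sigma> i}"
    have "\<sigma> i \<in> {1..n+m}" using i permutes_in_image[OF perm] by auto
    then have vN: "v \<in> {1..n+m}" using v by auto
    define j where "j = inv \<sigma> v"
    have sj: "\<sigma> j = v" using permutes_inverses[OF perm] j_def by auto
    have jN: "j \<in> {1..n+m}" using vN sj permutes_in_image[OF perm, of j] by auto
    have "j \<le> i"
    proof (rule ccontr)
      assume "\<not> j \<le> i"
      then have "\<sigma> i < \<sigma> j" using shuf_mono[OF s i jN] L v sj by fastforce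
      then show False using v sj by auto
    qed
    then show "v \<in> \<sigma> ` {j \<in> {1..i}. \<sigma> j \<le> n}" using sj jN v L by (auto intro!: image_eqI[of v \<sigma> j])
  qed
  have "card {j \<in> {1..i}. \<sigma> j \<le> n} = card (\<sigma> ` {j \<in> {1..i}. \<sigma> j \<le> n})"
    by (rule card_image[symmetric], rule permutes_inj_on[OF perm])
  then show ?thesis using img by simp
qed

lemma shuf_val_H:
  assumes s: "\<sigma> \<in> shuffleS n m" and i: "i \<in> {1..n+m}" and H: "n < \<sigma> i"
  shows "card {j \<in> {1..i}. n < \<sigma> j} = \<sigma> i - n"
proof -
  have perm: "\<sigma> permutes {1..n+m}" using s by (simp add: shuffleS_def)
  have img: "\<sigma> ` {j \<in> {1..i}. n < \<sigma> j} = {n+1..\<sigma> i}"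
  proof (rule set_eqI, rule iffI)
    fix v assume "v \<in> \<sigma> ` {j \<in> {1..i}. n < \<sigma> j}"
    then obtain j where j: "j \<in> {1..i}" "n < \<sigma> j" "v = \<sigma> j" by auto
    have jN: "j \<in> {1..n+m}" using j i by auto
    have "\<sigma> j \<le> \<sigma> i"
    proof (cases "j = i")
      case False
      then have "j < i" using j by auto
      then show ?thesis using shuf_mono[OF s jN i] j H by fastforce
    qed simp
    then show "v \<in> {n+1..\<sigma> i}" using j by auto
  next
    fix v assume v: "v \<in> {n+1..\<sigma> i}"
    have "\<sigma> i \<in> {1..n+m}" using i permutes_in_image[OF perm] by auto
    then have vN: "v \<in> {1..n+m}" using v by auto
    define j where "j = inv \<sigma> v"
    have sj: "\<sigma> j = v" using permutes_inverses[OF perm] j_def by auto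
    have jN: "j \<in> {1..n+m}" using vN sj permutes_in_image[OF perm, of j] by auto
    have "j \<le> i"
    proof (rule ccontr)
      assume "\<not> j \<le> i"
      then have "\<sigma> i < \<sigma> j" using shuf_mono[OF s i jN] H v sj by fastforce
      then show False using v sj by auto
    qed
    then show "v \<in> \<sigma> ` {j \<in> {1..i}. n < \<sigma> j}" using sj jN v H by (auto intro!: image_eqI[of v \<sigma> j])
  qed
  have "card {j \<in> {1..i}. n < \<sigma> j} = card (\<sigma> ` {j \<in> {1..i}. n < \<sigma> j})"
    by (rule card_image[symmetric], rule permutes_inj_on[OF perm])
  then show ?thesis using img by simp
qed

definition wordof :: "nat \<Rightarrow> nat \<Rightarrow> (nat \<Rightarrow> nat) \<Rightarrow> bool list" where
  "wordof n N \<sigma> = map (\<lambda>i. n < \<sigma> i) [1..<Suc N]"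

definition permof :: "nat \<Rightarrow> bool list \<Rightarrow> nat \<Rightarrow> nat" where
  "permof n w i = (if 1 \<le> i \<and> i \<le> length w then
     (if w ! (i - 1) then n + length (filter (\<lambda>b. b) (take i w)) else length (filter Not (take i w))) else i)"

lemma count_take:
  assumes "i \<le> N"
  shows "length (filter P (take i (map f [1..<Suc N]))) = card {j \<in> {1..i}. P (f j)}"
proof -
  have "take i (map f [1..<Suc N]) = map f [1..<Suc i]" using assms by (simp add: take_map take_upt del: upt_Suc)
  then have "length (filter P (take i (map f [1..<Suc N]))) = length (filter (P \<circ> f) [1..<Suc i])"
    by (simp add: filter_map)
  also have "\<dots> = card ({x. (P \<circ> f) x} \<inter> set [1..<Suc i])" by (rule distinct_length_filter) simp
  also have "{x. (P \<circ> f) x} \<inter> set [1..<Suc i] = {j \<in> {1..i}. P (f j)}" by auto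
  finally show ?thesis .
qed

lemma permof_wordof:
  assumes s: "\<sigma> \<in> shuffleS n m"
  shows "permof n (wordof n (n+m) \<sigma>) = \<sigma>"
proof
  fix i
  have perm: "\<sigma> permutes {1..n+m}" using s by (simp add: shuffleS_def)
  show "permof n (wordof n (n+m) \<sigma>) i = \<sigma> i"
  proof (cases "i \<in> {1..n+m}")
    case False
    then show ?thesis using permutes_not_in[OF perm False] by (auto simp: permof_def wordof_def)
  next
    case True
    have nth: "wordof n (n+m) \<sigma> ! (i - 1) = (n < \<sigma> i)" using True
      by (auto simp: wordof_def simp del: upt_Suc)
    show ?thesis
    proof (cases "n < \<sigma> i")
      case H: True
      have "length (filter (\<lambda>b. b) (take i (wordof n (n+m) \<sigma>))) = card {j \<in> {1..i}. n < \<sigma> j}"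
        unfolding wordof_def using True by (subst count_take) auto
      then show ?thesis using True H nth shuf_val_H[OF s True H] by (auto simp: permof_def wordof_def)
    next
      case L: False
      have "length (filter Not (take i (wordof n (n+m) \<sigma>))) = card {j \<in> {1..i}. \<not> n < \<sigma> j}"
        unfolding wordof_def using True by (subst count_take) auto
      also have "{j \<in> {1..i}. \<not> n < \<sigma> j} = {j \<in> {1..i}. \<sigma> j \<le> n}" by auto
      finally have "length (filter Not (take i (wordof n (n+m) \<sigma>))) = card {j \<in> {1..i}. \<sigma> j \<le> n}" .
      then show ?thesis using True L nth shuf_val_L[OF s True] by (auto simp: permof_def wordof_def)
    qed
  qed
qed


lemma shuf_count_H:
  assumes s: "\<sigma> \<in> shuffleS n m"
  shows "card {j \<in> {1..n+m}. n < \<sigma> j} = m"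
proof -
  have perm: "\<sigma> permutes {1..n+m}" using s by (simp add: shuffleS_def)
  have img: "\<sigma> ` {j \<in> {1..n+m}. n < \<sigma> j} = {n+1..n+m}"
  proof (rule set_eqI, rule iffI)
    fix v assume "v \<in> \<sigma> ` {j \<in> {1..n+m}. n < \<sigma> j}"
    then obtain j where j: "j \<in> {1..n+m}" "n < \<sigma> j" "v = \<sigma> j" by blast
    have "\<sigma> j \<in> {1..n+m}" using j(1) permutes_in_image[OF perm] by blast
    then show "v \<in> {n+1..n+m}" using j by simp
  next
    fix v assume v: "v \<in> {n+1..n+m}"
    define j where "j = inv \<sigma> v"
    have sj: "\<sigma> j = v" using permutes_inverses[OF perm] j_def by auto
    have jN: "j \<in> {1..n+m}" using v sj permutes_in_image[OF perm, of j] by auto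
    then show "v \<in> \<sigma> ` {j \<in> {1..n+m}. n < \<sigma> j}" using sj v by (auto intro!: image_eqI[of v \<sigma> j])
  qed
  have "card {j \<in> {1..n+m}. n < \<sigma> j} = card (\<sigma> ` {j \<in> {1..n+m}. n < \<sigma> j})"
    by (rule card_image[symmetric], rule permutes_inj_on[OF perm])
  then show ?thesis using img by simp
qed

lemma wordof_Wd:
  assumes s: "\<sigma> \<in> shuffleS n m"
  shows "wordof n (n+m) \<sigma> \<in> Wd n m"
proof -
  have len: "length (wordof n (n+m) \<sigma>) = n + m" by (simp add: wordof_def del: upt_Suc)
  have "length (filter (\<lambda>b. b) (take (n+m) (wordof n (n+m) \<sigma>))) = card {j \<in> {1..n+m}. n < \<sigma> j}"
    unfolding wordof_def by (subst count_take) auto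
  then have T: "length (filter (\<lambda>b. b) (wordof n (n+m) \<sigma>)) = m" using shuf_count_H[OF s] len by simp
  moreover have "length (filter Not (wordof n (n+m) \<sigma>)) = n"
    using sum_length_filter_compl[of "\<lambda>b. b" "wordof n (n+m) \<sigma>"] T len by simp
  ultimately show ?thesis by (simp add: Wd_def)
qed

lemma cnt_mono: "i \<le> j \<Longrightarrow> length (filter P (take i w)) \<le> length (filter P (take j w))"
proof -
  assume "i \<le> j"
  then obtain k where "j = i + k" by (auto dest: le_Suc_ex)
  then show ?thesis by (simp add: take_add)
qed

lemma cnt_step: "1 \<le> j \<Longrightarrow> j \<le> length w \<Longrightarrow>
  length (filter P (take j w)) = length (filter P (take (j - 1) w)) + (if P (w ! (j - 1)) then 1 else 0)"
proof -
  assume j: "1 \<le> j" "j \<le> length w"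
  then have "take j w = take (j - 1) w @ [w ! (j - 1)]"
    using take_Suc_conv_app_nth[of "j - 1" w] by simp
  then show ?thesis by simp
qed

lemma cnt_le: "length (filter P (take i w)) \<le> length (filter P w)"
  using cnt_mono[of i "length w" P w] by (cases "i \<le> length w") auto

lemma cnt_strict:
  assumes "i < j" "j \<le> length w" "P (w ! (j - 1))"
  shows "length (filter P (take i w)) < length (filter P (take j w))"
proof -
  have "length (filter P (take i w)) \<le> length (filter P (take (j - 1) w))" using assms by (intro cnt_mono) auto
  moreover have "length (filter P (take j w)) = length (filter P (take (j - 1) w)) + 1"
    using cnt_step[of j w P] assms by simp
  ultimately show ?thesis by simp
qed

lemma cnt_pos:
  assumes "1 \<le> j" "j \<le> length w" "P (w ! (j - 1))"
  shows "1 \<le> length (filter P (take j w))"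
  using cnt_step[of j w P] assms by simp


context
  fixes n m :: nat and w :: "bool list"
  assumes w: "w \<in> Wd n m"
begin

lemma lenw: "length w = n + m"
  using w sum_length_filter_compl[of "\<lambda>b. b" w] by (simp add: Wd_def)

lemma permof_H:
  assumes "i \<in> {1..n+m}" "w ! (i - 1)"
  shows "n < permof n w i \<and> permof n w i \<le> n + m"
proof -
  have "1 \<le> length (filter (\<lambda>b. b) (take i w))" using assms lenw by (intro cnt_pos) auto
  moreover have "length (filter (\<lambda>b. b) (take i w)) \<le> m" using cnt_le[of "\<lambda>b. b" i w] w by (simp add: Wd_def)
  moreover have "permof n w i = n + length (filter (\<lambda>b. b) (take i w))" using assms lenw by (simp add: permof_def)
  ultimately show ?thesis by linarith
qed

lemma permof_L:
  assumes "i \<in> {1..n+m}" "\<not> w ! (i - 1)"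
  shows "1 \<le> permof n w i \<and> permof n w i \<le> n"
proof -
  have "1 \<le> length (filter Not (take i w))" using assms lenw by (intro cnt_pos) auto
  moreover have "length (filter Not (take i w)) \<le> n" using cnt_le[of Not i w] w by (simp add: Wd_def)
  moreover have "permof n w i = length (filter Not (take i w))" using assms lenw by (simp add: permof_def)
  ultimately show ?thesis by linarith
qed

lemma permof_side:
  assumes "i \<in> {1..n+m}"
  shows "n < permof n w i \<longleftrightarrow> w ! (i - 1)"
  using permof_H[OF assms] permof_L[OF assms] by (cases "w ! (i - 1)") simp_all

lemma permof_strict:
  assumes i: "i \<in> {1..n+m}" and j: "j \<in> {1..n+m}" and ij: "i < j" and eq: "w ! (i - 1) = w ! (j - 1)"
  shows "permof n w i < permof n w j"
proof (cases "w ! (j - 1)")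
  case True
  have "length (filter (\<lambda>b. b) (take i w)) < length (filter (\<lambda>b. b) (take j w))"
    using True ij j lenw by (intro cnt_strict) auto
  then show ?thesis using i j True eq lenw by (simp add: permof_def)
next
  case False
  have "length (filter Not (take i w)) < length (filter Not (take j w))"
    using False ij j lenw by (intro cnt_strict) auto
  then show ?thesis using i j False eq lenw by (simp add: permof_def)
qed

lemma permof_inj: "inj_on (permof n w) {1..n+m}"
proof (rule inj_onI)
  fix i j assume i: "i \<in> {1..n+m}" and j: "j \<in> {1..n+m}" and e: "permof n w i = permof n w j"
  show "i = j"
  proof (rule ccontr)
    assume "i \<noteq> j"
    then consider "i < j" | "j < i" by linarith
    then show False
    proof cases
      case 1
      show False
      proof (cases "w ! (i - 1) = w ! (j - 1)")
        case True then show False using permof_strict[OF i j 1] e by simp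
      next
        case False then show False using permof_side[OF i] permof_side[OF j] e by metis
      qed
    next
      case 2
      show False
      proof (cases "w ! (i - 1) = w ! (j - 1)")
        case True then show False using permof_strict[OF j i 2] e by simp
      next
        case False then show False using permof_side[OF i] permof_side[OF j] e by metis
      qed
    qed
  qed
qed

lemma permof_range: "permof n w ` {1..n+m} \<subseteq> {1..n+m}"
proof
  fix v assume "v \<in> permof n w ` {1..n+m}"
  then obtain i where i: "i \<in> {1..n+m}" "v = permof n w i" by auto
  then show "v \<in> {1..n+m}" using permof_H[OF i(1)] permof_L[OF i(1)] by (cases "w ! (i - 1)") auto
qed

lemma permof_perm: "permof n w permutes {1..n+m}"
proof (rule bij_imp_permutes)
  show "bij_betw (permof n w) {1..n+m} {1..n+m}"
    unfolding bij_betw_def using permof_inj permof_range endo_inj_surj[OF _ permof_range permof_inj] by simp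
next
  fix x assume "x \<notin> {1..n+m}"
  then show "permof n w x = x" using lenw by (auto simp: permof_def)
qed

lemma permof_shuffle: "permof n w \<in> shuffleS n m"
proof -
  let ?p = "permof n w"
  have perm: "?p permutes {1..n+m}" by (rule permof_perm)
  have A: "inv ?p a < inv ?p b" if ab: "1 \<le> a" "a < b" "b \<le> n" for a b
  proof -
    define p q where "p = inv ?p a" and "q = inv ?p b"
    have pa: "?p p = a" and qb: "?p q = b" using permutes_inverses[OF perm] p_def q_def by auto
    have pN: "p \<in> {1..n+m}" using permutes_in_image[OF perm, of p] pa ab by auto
    have qN: "q \<in> {1..n+m}" using permutes_in_image[OF perm, of q] qb ab by auto
    have Lp: "\<not> w ! (p - 1)" using permof_H[OF pN] pa ab by auto
    have Lq: "\<not> w ! (q - 1)" using permof_H[OF qN] qb ab by auto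
    show "p < q"
    proof (rule ccontr)
      assume "\<not> p < q"
      moreover have "p \<noteq> q" using pa qb ab by auto
      ultimately have "q < p" by simp
      then have "?p q < ?p p" using permof_strict[OF qN pN] Lp Lq by simp
      then show False using pa qb ab by simp
    qed
  qed
  have B: "inv ?p a < inv ?p b" if ab: "n + 1 \<le> a" "a < b" "b \<le> n + m" for a b
  proof -
    define p q where "p = inv ?p a" and "q = inv ?p b"
    have pa: "?p p = a" and qb: "?p q = b" using permutes_inverses[OF perm] p_def q_def by auto
    have pN: "p \<in> {1..n+m}" using permutes_in_image[OF perm, of p] pa ab by auto
    have qN: "q \<in> {1..n+m}" using permutes_in_image[OF perm, of q] qb ab by auto
    have Lp: "w ! (p - 1)" using permof_L[OF pN] pa ab by auto
    have Lq: "w ! (q - 1)" using permof_L[OF qN] qb ab by auto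
    show "p < q"
    proof (rule ccontr)
      assume "\<not> p < q"
      moreover have "p \<noteq> q" using pa qb ab by auto
      ultimately have "q < p" by simp
      then have "?p q < ?p p" using permof_strict[OF qN pN] Lp Lq by simp
      then show False using pa qb ab by simp
    qed
  qed
  show ?thesis unfolding shuffleS_def using perm A B by blast
qed

lemma wordof_permof: "wordof n (n+m) (permof n w) = w"
proof (rule nth_equalityI)
  show "length (wordof n (n+m) (permof n w)) = length w" using lenw by (simp add: wordof_def del: upt_Suc)
next
  fix k assume "k < length (wordof n (n+m) (permof n w))"
  then have k: "k < n + m" by (simp add: wordof_def del: upt_Suc)
  then have kk: "Suc k \<in> {1..n+m}" by auto
  have "wordof n (n+m) (permof n w) ! k = (n < permof n w (Suc k))"
    using k by (simp add: wordof_def del: upt_Suc)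
  also have "\<dots> = w ! k" using permof_side[OF kk] by simp
  finally show "wordof n (n+m) (permof n w) ! k = w ! k" .
qed

end

lemma bij_wordof: "bij_betw (wordof n (n+m)) (shuffleS n m) (Wd n m)"
proof (rule bij_betw_byWitness[where f'="permof n"])
  show "\<forall>a\<in>shuffleS n m. permof n (wordof n (n + m) a) = a" using permof_wordof by blast
  show "\<forall>a'\<in>Wd n m. wordof n (n + m) (permof n a') = a'" using wordof_permof by blast
  show "wordof n (n + m) ` shuffleS n m \<subseteq> Wd n m" using wordof_Wd by blast
  show "permof n ` Wd n m \<subseteq> shuffleS n m" using permof_shuffle by blast
qed



lemma hlc_card: "hlc w = card {k. Suc k < length w \<and> w ! k \<and> \<not> w ! Suc k}"
proof (induction w rule: hlc.induct)
  case 1 then show ?case by simp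
next
  case (2 x) then show ?case by simp
next
  case (3 x y w)
  let ?A = "{k. Suc k < length (y # w) \<and> (y # w) ! k \<and> \<not> (y # w) ! Suc k}"
  have eq: "{k. Suc k < length (x # y # w) \<and> (x # y # w) ! k \<and> \<not> (x # y # w) ! Suc k}
      = (if x \<and> \<not> y then {0} else {}) \<union> Suc ` ?A"
  proof (rule set_eqI)
    fix k show "k \<in> {k. Suc k < length (x # y # w) \<and> (x # y # w) ! k \<and> \<not> (x # y # w) ! Suc k}
      \<longleftrightarrow> k \<in> (if x \<and> \<not> y then {0} else {}) \<union> Suc ` ?A"
      by (cases k) (auto simp: image_iff)
  qed
  have "card ((if x \<and> \<not> y then {0} else {}) \<union> Suc ` ?A) = (if x \<and> \<not> y then 1 else 0) + card (Suc ` ?A)"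
    by (subst card_Un_disjoint) auto
  also have "card (Suc ` ?A) = card ?A" by (rule card_image) simp
  finally show ?case using 3 eq by simp
qed

lemma peak_iff:
  assumes s: "\<sigma> \<in> shuffleS n m" and i: "i \<in> {1..n+m-1}"
  shows "(ext0 \<sigma> (i - 1) < ext0 \<sigma> i \<and> ext0 \<sigma> i > ext0 \<sigma> (i + 1)) \<longleftrightarrow> (n < \<sigma> i \<and> \<not> n < \<sigma> (Suc i))"
proof -
  have iN: "i \<in> {1..n+m}" and i1N: "Suc i \<in> {1..n+m}" using i by auto
  have e1: "ext0 \<sigma> i = \<sigma> i" "ext0 \<sigma> (i + 1) = \<sigma> (Suc i)" using i by (auto simp: ext0_def)
  show ?thesis
  proof
    assume "ext0 \<sigma> (i - 1) < ext0 \<sigma> i \<and> ext0 \<sigma> i > ext0 \<sigma> (i + 1)"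
    then have lt: "\<sigma> (Suc i) < \<sigma> i" using e1 by simp
    have "n < \<sigma> i"
    proof (rule ccontr)
      assume "\<not> n < \<sigma> i"
      then have "\<sigma> i < \<sigma> (Suc i)" using shuf_mono[OF s iN i1N] lt by simp
      then show False using lt by simp
    qed
    moreover have "\<not> n < \<sigma> (Suc i)"
    proof
      assume "n < \<sigma> (Suc i)"
      then have "\<sigma> i < \<sigma> (Suc i)" using shuf_mono[OF s iN i1N] lt by simp
      then show False using lt by simp
    qed
    ultimately show "n < \<sigma> i \<and> \<not> n < \<sigma> (Suc i)" ..
  next
    assume H: "n < \<sigma> i \<and> \<not> n < \<sigma> (Suc i)"
    have "ext0 \<sigma> (i - 1) < \<sigma> i"
    proof (cases "i = 1")
      case True then show ?thesis using H by (simp add: ext0_def)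
    next
      case False
      then have im: "i - 1 \<in> {1..n+m}" and ii: "i - 1 < i" using i by auto
      have e0: "ext0 \<sigma> (i - 1) = \<sigma> (i - 1)" using False i by (simp add: ext0_def)
      show ?thesis
      proof (cases "n < \<sigma> (i - 1)")
        case True then show ?thesis using shuf_mono[OF s im iN ii] H e0 by simp
      next
        case False then show ?thesis using H e0 by simp
      qed
    qed
    then show "ext0 \<sigma> (i - 1) < ext0 \<sigma> i \<and> ext0 \<sigma> i > ext0 \<sigma> (i + 1)" using H e1 by simp
  qed
qed

lemma pplus_hlc:
  assumes s: "\<sigma> \<in> shuffleS n m"
  shows "pplus (n+m) \<sigma> = hlc (wordof n (n+m) \<sigma>)"
proof -
  let ?w = "wordof n (n+m) \<sigma>"
  have len: "length ?w = n + m" by (simp add: wordof_def del: upt_Suc)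
  have nth: "k < n + m \<Longrightarrow> ?w ! k = (n < \<sigma> (Suc k))" for k by (simp add: wordof_def del: upt_Suc)
  have "{i \<in> {1..n+m-1}. ext0 \<sigma> (i - 1) < ext0 \<sigma> i \<and> ext0 \<sigma> i > ext0 \<sigma> (i + 1)}
      = {i \<in> {1..n+m-1}. n < \<sigma> i \<and> \<not> n < \<sigma> (Suc i)}"
    using peak_iff[OF s] by blast
  also have "\<dots> = Suc ` {k. Suc k < length ?w \<and> ?w ! k \<and> \<not> ?w ! Suc k}"
  proof (rule set_eqI)
    fix i show "i \<in> {i \<in> {1..n+m-1}. n < \<sigma> i \<and> \<not> n < \<sigma> (Suc i)} \<longleftrightarrow> i \<in> Suc ` {k. Suc k < length ?w \<and> ?w ! k \<and> \<not> ?w ! Suc k}"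
      using len nth by (cases i) (auto simp: image_iff)
  qed
  finally have "pplus (n+m) \<sigma> = card (Suc ` {k. Suc k < length ?w \<and> ?w ! k \<and> \<not> ?w ! Suc k})"
    by (simp add: pplus_def)
  also have "\<dots> = hlc ?w" by (subst card_image) (simp_all add: hlc_card)
  finally show ?thesis .
qed

lemma pminus_hlc:
  assumes s: "\<sigma> \<in> shuffleS n m"
  shows "pminus (n+m) \<sigma> = hlc (tl (wordof n (n+m) \<sigma>))"
proof -
  let ?w = "tl (wordof n (n+m) \<sigma>)"
  have len: "length ?w = n + m - 1" by (simp add: wordof_def del: upt_Suc)
  have nth: "k < n + m - 1 \<Longrightarrow> ?w ! k = (n < \<sigma> (Suc (Suc k)))" for k
  proof -
    assume k: "k < n + m - 1"
    have "[Suc 0..<Suc (n+m)] ! Suc k = Suc (Suc k)" using k by (subst nth_upt) auto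
    then show ?thesis using k by (simp add: wordof_def nth_tl del: upt_Suc)
  qed
  have "{i \<in> {2..n+m-1}. ext0 \<sigma> (i - 1) < ext0 \<sigma> i \<and> ext0 \<sigma> i > ext0 \<sigma> (i + 1)}
      = {i \<in> {2..n+m-1}. n < \<sigma> i \<and> \<not> n < \<sigma> (Suc i)}"
  proof (rule Collect_cong)
    fix i show "(i \<in> {2..n+m-1} \<and> ext0 \<sigma> (i - 1) < ext0 \<sigma> i \<and> ext0 \<sigma> i > ext0 \<sigma> (i + 1))
      = (i \<in> {2..n+m-1} \<and> n < \<sigma> i \<and> \<not> n < \<sigma> (Suc i))"
      using peak_iff[OF s, of i] by auto
  qed
  also have "\<dots> = (\<lambda>k. Suc (Suc k)) ` {k. Suc k < length ?w \<and> ?w ! k \<and> \<not> ?w ! Suc k}"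
  proof (rule set_eqI)
    fix i show "i \<in> {i \<in> {2..n+m-1}. n < \<sigma> i \<and> \<not> n < \<sigma> (Suc i)} \<longleftrightarrow> i \<in> (\<lambda>k. Suc (Suc k)) ` {k. Suc k < length ?w \<and> ?w ! k \<and> \<not> ?w ! Suc k}"
    proof
      assume "i \<in> {i \<in> {2..n+m-1}. n < \<sigma> i \<and> \<not> n < \<sigma> (Suc i)}"
      then show "i \<in> (\<lambda>k. Suc (Suc k)) ` {k. Suc k < length ?w \<and> ?w ! k \<and> \<not> ?w ! Suc k}"
      proof -
        assume a: "i \<in> {i \<in> {2..n+m-1}. n < \<sigma> i \<and> \<not> n < \<sigma> (Suc i)}"
        then have ss: "Suc (Suc (i - 2)) = i" by auto
        show ?thesis using a len nth ss by (intro image_eqI[of i _ "i - 2"]) auto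
      qed
    next
      assume "i \<in> (\<lambda>k. Suc (Suc k)) ` {k. Suc k < length ?w \<and> ?w ! k \<and> \<not> ?w ! Suc k}"
      then show "i \<in> {i \<in> {2..n+m-1}. n < \<sigma> i \<and> \<not> n < \<sigma> (Suc i)}"
        using len nth by auto
    qed
  qed
  finally have "pminus (n+m) \<sigma> = card ((\<lambda>k. Suc (Suc k)) ` {k. Suc k < length ?w \<and> ?w ! k \<and> \<not> ?w ! Suc k})"
    by (simp add: pminus_def)
  also have "\<dots> = hlc ?w" by (subst card_image) (simp_all add: hlc_card inj_on_def)
  finally show ?thesis .
qed



definition gM :: "nat \<Rightarrow> nat \<Rightarrow> real" where
  "gM M k = (-1)^k * superC k (M - k)"

lemma PhiW:
  assumes "n + m = 2*M"
  shows "(\<Sum>w\<in>Wd n m. gM M (hlc w)) = (if even n then superC 0 (n div 2) * superC 0 (m div 2) else 0)"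
proof -
  have "(\<Sum>w\<in>Wd n m. gM M (hlc w)) = (\<Sum>k\<le>n+m. real (n choose k) * real (m choose k) * gM M k)"
    by (rule count_I) simp
  also have "\<dots> = (if even n then real (n choose (n div 2)) * real (m choose (m div 2)) else 0)"
    unfolding gM_def by (rule Phi[OF assms])
  also have "\<dots> = (if even n then superC 0 (n div 2) * superC 0 (m div 2) else 0)"
  proof (cases "even n")
    case True
    then have "even m" using assms by presburger
    then show ?thesis using True by (simp add: superC_0)
  qed simp
  finally show ?thesis .
qed

lemma hlc_repF: "hlc (replicate k False) = 0"
  by (induction k) (simp_all add: hlc_False)

lemma diff_lemma:
  fixes f :: "nat \<Rightarrow> real"
  shows "(\<Sum>w\<in>Wd (Suc n') m'. f (hlc w)) = (\<Sum>w\<in>Wd (Suc n') m'. f (hlc (True # w))) + (\<Sum>w\<in>Wd n' m'. (f (hlc w) - f (Suc (hlc w))))"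
proof (cases m')
  case 0
  then show ?thesis by (simp add: sum_Wd_S0 hlc_False hlc_TF sum.distrib[symmetric])
next
  case (Suc m'')
  then show ?thesis by (simp add: sum_Wd_SS hlc_False hlc_TF hlc_TT sum_subtractf)
qed

lemma gM_diff:
  assumes "Suc k \<le> M"
  shows "gM M k - gM M (Suc k) = 4 * gM (M - 1) k"
proof -
  have q: "Suc (M - 1 - k) = M - k" "M - Suc k = M - 1 - k" using assms by auto
  have "superC (Suc k) (M - 1 - k) + superC k (Suc (M - 1 - k)) = 4 * superC k (M - 1 - k)"
    by (rule superC_rec)
  then have "(-1::real)^k * (superC (Suc k) (M - 1 - k) + superC k (Suc (M - 1 - k))) = (-1)^k * (4 * superC k (M - 1 - k))"
    by simp
  then show ?thesis unfolding gM_def q by (simp only: distrib_left mult.left_commute diff_minus_eq_add power_Suc mult_minus_left minus_minus add.commute)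
qed

theorem main_words:
  fixes n m :: nat
  shows "(\<Sum>w\<in>Wd n m. gM ((n+m) div 2) (hlc (tl w)))
         = (if even n \<or> even m then superC 0 (n div 2) * superC 0 (m div 2)
            else 4 * superC 0 (n div 2) * superC 0 (m div 2))"
proof (cases n)
  case 0
  note n = this
  show ?thesis
  proof (cases m)
    case 0 then show ?thesis using n by (simp add: Wd_00 gM_def superC_def)
  next
    case (Suc m')
    then show ?thesis using n by (simp add: Wd_0m hlc_rep gM_def superC_def)
  qed
next
  case (Suc n')
  note n = this
  show ?thesis
  proof (cases m)
    case 0 then show ?thesis using n by (simp add: Wd_n0 hlc_repF gM_def superC_def)
  next
    case (Suc m')
    note m = this
    define M where "M = (n + m) div 2"
    have tl_sum: "(\<Sum>w\<in>Wd n m. gM M (hlc (tl w))) = (\<Sum>w\<in>Wd n' (Suc m'). gM M (hlc w)) + (\<Sum>w\<in>Wd (Suc n') m'. gM M (hlc w))"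
      unfolding n m by (simp add: sum_Wd_SS)
    show ?thesis
    proof (cases "even (n + m)")
      case False
      then have NM1: "n + m = 2 * M + 1" unfolding M_def by simp
      then have NM: "n' + Suc m' = 2 * M" "Suc n' + m' = 2 * M" using n m by linarith+
      have "(\<Sum>w\<in>Wd n m. gM M (hlc (tl w))) = (if even n' then superC 0 (n' div 2) * superC 0 (Suc m' div 2) else 0)
          + (if even (Suc n') then superC 0 (Suc n' div 2) * superC 0 (m' div 2) else 0)"
        unfolding tl_sum PhiW[OF NM(1)] PhiW[OF NM(2)] ..
      also have "\<dots> = superC 0 (n div 2) * superC 0 (m div 2)"
        using False n m by (cases "even n'") (auto elim!: evenE oddE)
      finally show ?thesis using False n m M_def by auto
    next
      case True
      have NM1: "n + m = 2 * M" using True unfolding M_def by simp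
      have NM: "n + m = 2 * M" "n' + m' = 2 * (M - 1)" using NM1 n m by linarith+
      have full: "(\<Sum>w\<in>Wd n m. gM M (hlc w)) = (\<Sum>w\<in>Wd n' (Suc m'). gM M (hlc w)) + (\<Sum>w\<in>Wd (Suc n') m'. gM M (hlc (True # w)))"
        unfolding n m by (simp add: sum_Wd_SS hlc_False)
      have "(\<Sum>w\<in>Wd n' m'. (gM M (hlc w) - gM M (Suc (hlc w))))
          = (\<Sum>k\<le>n'+m'. real (n' choose k) * real (m' choose k) * (gM M k - gM M (Suc k)))"
        by (rule count_I) simp
      also have "\<dots> = 4 * (\<Sum>k\<le>n'+m'. real (n' choose k) * real (m' choose k) * gM (M - 1) k)"
        unfolding sum_distrib_left
      proof (intro sum.cong refl)
        fix k assume "k \<in> {..n'+m'}"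
        show "real (n' choose k) * real (m' choose k) * (gM M k - gM M (Suc k)) = 4 * (real (n' choose k) * real (m' choose k) * gM (M - 1) k)"
        proof (cases "k \<le> n' \<and> k \<le> m'")
          case True
          then have "Suc k \<le> M" using NM n m by linarith
          then show ?thesis using gM_diff by simp
        next
          case False then show ?thesis by (auto simp: binomial_eq_0)
        qed
      qed
      also have "(\<Sum>k\<le>n'+m'. real (n' choose k) * real (m' choose k) * gM (M - 1) k) = (\<Sum>w\<in>Wd n' m'. gM (M - 1) (hlc w))"
        by (rule count_I[symmetric]) simp
      finally have D: "(\<Sum>w\<in>Wd n' m'. (gM M (hlc w) - gM M (Suc (hlc w)))) = 4 * (\<Sum>w\<in>Wd n' m'. gM (M - 1) (hlc w))" .
      have "(\<Sum>w\<in>Wd n m. gM M (hlc (tl w))) = (\<Sum>w\<in>Wd n m. gM M (hlc w)) + 4 * (\<Sum>w\<in>Wd n' m'. gM (M - 1) (hlc w))"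
        unfolding tl_sum full diff_lemma[of _ n' m'] D by simp
      also have "\<dots> = (if even n then superC 0 (n div 2) * superC 0 (m div 2) else 0)
          + 4 * (if even n' then superC 0 (n' div 2) * superC 0 (m' div 2) else 0)"
        unfolding PhiW[OF NM(1)] PhiW[OF NM(2)] ..
      also have "\<dots> = (if even n \<or> even m then superC 0 (n div 2) * superC 0 (m div 2)
            else 4 * superC 0 (n div 2) * superC 0 (m div 2))"
        using True n m by (cases "even n'") (auto elim!: evenE oddE)
      finally show ?thesis using M_def by simp
    qed
  qed
qed


theorem corollary7p3:
  fixes n m :: nat
  shows "((\<Sum>\<sigma>\<in>shuffleS n m. (-1) ^ pminus (n + m) \<sigma>
            * superC (pminus (n + m) \<sigma>) ((n + m) div 2 - pminus (n + m) \<sigma>))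
         = (if even n \<or> even m then superC 0 (n div 2) * superC 0 (m div 2)
            else 4 * superC 0 (n div 2) * superC 0 (m div 2)))
         \<and> (even (n + m) \<longrightarrow>
         (\<Sum>\<sigma>\<in>shuffleS n m. (-1) ^ pplus (n + m) \<sigma>
            * superC (pplus (n + m) \<sigma>) ((n + m) div 2 - pplus (n + m) \<sigma>))
         = (if even n \<and> even m then superC 0 (n div 2) * superC 0 (m div 2) else 0))"
proof -
  define M where "M = (n + m) div 2"
  have bij: "bij_betw (wordof n (n+m)) (shuffleS n m) (Wd n m)" by (rule bij_wordof)
  have S1: "(\<Sum>\<sigma>\<in>shuffleS n m. (-1) ^ pminus (n + m) \<sigma> * superC (pminus (n + m) \<sigma>) ((n + m) div 2 - pminus (n + m) \<sigma>))
      = (\<Sum>\<sigma>\<in>shuffleS n m. gM M (hlc (tl (wordof n (n+m) \<sigma>))))"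
    by (intro sum.cong refl) (simp add: pminus_hlc gM_def M_def)
  also have "\<dots> = (\<Sum>w\<in>Wd n m. gM M (hlc (tl w)))"
    by (rule sum.reindex_bij_betw[OF bij])
  finally have P1: "(\<Sum>\<sigma>\<in>shuffleS n m. (-1) ^ pminus (n + m) \<sigma> * superC (pminus (n + m) \<sigma>) ((n + m) div 2 - pminus (n + m) \<sigma>))
      = (if even n \<or> even m then superC 0 (n div 2) * superC 0 (m div 2)
            else 4 * superC 0 (n div 2) * superC 0 (m div 2))"
    using main_words[of n m] unfolding M_def by simp
  have S2: "(\<Sum>\<sigma>\<in>shuffleS n m. (-1) ^ pplus (n + m) \<sigma> * superC (pplus (n + m) \<sigma>) ((n + m) div 2 - pplus (n + m) \<sigma>))
      = (\<Sum>\<sigma>\<in>shuffleS n m. gM M (hlc (wordof n (n+m) \<sigma>)))"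
    by (intro sum.cong refl) (simp add: pplus_hlc gM_def M_def)
  also have "\<dots> = (\<Sum>w\<in>Wd n m. gM M (hlc w))"
    by (rule sum.reindex_bij_betw[OF bij])
  finally have S2': "(\<Sum>\<sigma>\<in>shuffleS n m. (-1) ^ pplus (n + m) \<sigma> * superC (pplus (n + m) \<sigma>) ((n + m) div 2 - pplus (n + m) \<sigma>))
      = (\<Sum>w\<in>Wd n m. gM M (hlc w))" .
  have P2: "(\<Sum>\<sigma>\<in>shuffleS n m. (-1) ^ pplus (n + m) \<sigma> * superC (pplus (n + m) \<sigma>) ((n + m) div 2 - pplus (n + m) \<sigma>))
      = (if even n \<and> even m then superC 0 (n div 2) * superC 0 (m div 2) else 0)" if ev: "even (n + m)"
  proof -
    have NM: "n + m = 2 * M" using ev unfolding M_def by simp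
    have "even n \<longleftrightarrow> even n \<and> even m" using ev by auto
    then show ?thesis unfolding S2' PhiW[OF NM] by simp
  qed
  show ?thesis using P1 P2 by blast
qed

end
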